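(* Let $\epsilon>0$, $r>0$, $r_1=(1+\epsilon)r$, let $\alpha$ be a real number with $0<\alpha<1$, and let $N$ be an integer with $N>\frac{5}{\alpha^2\epsilon}$. Then there exist $N$ open subsets $W_1,\dots,W_N$ of $\Delta_{r_1}$ such that $\mathrm{diam}_{r_1}(W_i)\le\alpha$ for every $i$ and $\Delta_r\subset\bigcup_{i=1}^NW_i$.
   Context: $\Delta_\rho$ is the open disk in $\mathbf C$ centered at $0$ of radius $\rho$. On $\Delta_{r_1}$, $d_{r_1}(z,w)=\left|\frac{r_1(z-w)}{r_1^2-z\overline w}\right|$ (a distance), and for $W\subset\Delta_{r_1}$, $\mathrm{diam}_{r_1}(W)=\sup\{d_{r_1}(z,w):z,w\in W\}$. *)

theory Defs
  imports "HOL-Analysis.Analysis"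
begin

definition disk_dist :: "real \<Rightarrow> complex \<Rightarrow> complex \<Rightarrow> real" where
  "disk_dist r1 z w = cmod (of_real r1 * (z - w) / (of_real (r1^2) - z * cnj w))"

text \<open>Diameter w.r.t. disk_dist: supremum of pairwise distances
  (the empty set gets diameter 0 by convention).\<close>
definition disk_diam :: "real \<Rightarrow> complex set \<Rightarrow> real" where
  "disk_diam r1 W = Sup (insert 0 {disk_dist r1 z w | z w. z \<in> W \<and> w \<in> W})"

end

theory Submission
  imports Defs
begin

lemma cis_dist_le: "cmod (exp (\<i> * of_real a) - exp (\<i> * of_real b)) \<le> \<bar>a - b\<bar>"
proof -
  have "exp (\<i> * of_real a) - exp (\<i> * of_real b) = exp (\<i> * of_real b) * (exp (\<i> * of_real (a - b)) - 1)"
    by (simp add: algebra_simps flip: exp_add)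
  hence "cmod (exp (\<i> * of_real a) - exp (\<i> * of_real b)) = cmod (exp (\<i> * of_real (a - b)) - 1)"
    by (simp add: norm_mult)
  also have "\<dots> = 2 * \<bar>sin ((a - b) / 2)\<bar>" by (rule dist_exp_i_1)
  also have "\<dots> \<le> 2 * \<bar>(a - b) / 2\<bar>" using abs_sin_x_le_abs_x[of "(a - b) / 2"] by simp
  finally show ?thesis by simp
qed

lemma unit_root_close:
  fixes v :: complex and M :: nat
  assumes "cmod v = 1" "M > 0"
  shows "\<exists>k<M. cmod (v - exp (\<i> * of_real (2 * pi * real k / real M))) \<le> pi / real M"
proof -
  define \<theta> where "\<theta> = Arg2pi v"
  have th: "0 \<le> \<theta>" "\<theta> < 2 * pi" "is_Arg v \<theta>" using Arg2pi[of v] by (auto simp: \<theta>_def)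
  have v: "v = exp (\<i> * of_real \<theta>)" using th(3) assms(1) unfolding is_Arg_def by simp
  define k0 where "k0 = round (\<theta> * real M / (2 * pi))"
  have r: "\<bar>\<theta> * real M / (2 * pi) - of_int k0\<bar> \<le> 1/2" unfolding k0_def
    using of_int_round_abs_le by (simp add: abs_minus_commute)
  have Mpos: "real M > 0" using assms by simp
  have "\<theta> * real M / (2 * pi) < real M" using th Mpos by (simp add: field_simps)
  hence k0le: "k0 \<le> int M" unfolding k0_def
    by (smt (verit) of_int_round_le of_nat_less_of_int_iff of_int_of_nat_eq round_mono round_of_int)
  have k0ge: "k0 \<ge> 0" unfolding k0_def using th Mpos
    by (smt (verit) divide_nonneg_pos mult_nonneg_nonneg of_int_round_ge pi_gt_zero of_int_0_le_iff round_mono round_0 of_int_0)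
  have dist: "\<bar>\<theta> - 2 * pi * of_int k0 / real M\<bar> \<le> pi / real M"
  proof -
    have "\<theta> - 2 * pi * of_int k0 / real M = (2 * pi / real M) * (\<theta> * real M / (2 * pi) - of_int k0)"
      using Mpos by (simp add: field_simps)
    hence "\<bar>\<theta> - 2 * pi * of_int k0 / real M\<bar> = (2 * pi / real M) * \<bar>\<theta> * real M / (2 * pi) - of_int k0\<bar>"
      using Mpos by (simp add: abs_mult)
    also have "\<dots> \<le> (2 * pi / real M) * (1/2)" using r Mpos by (intro mult_left_mono) auto
    finally show ?thesis by simp
  qed
  show ?thesis
  proof (cases "k0 = int M")
    case True
    have "exp (\<i> * of_real (2 * pi * of_int k0 / real M)) = exp (\<i> * of_real (2 * pi * real 0 / real M))"
      using True Mpos by (simp add: exp_eq_1)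
    moreover have "exp (\<i> * of_real (2 * pi * of_int k0 / real M)) = exp (\<i> * of_real (2 * pi * of_int k0 / real M))" ..
    ultimately show ?thesis using cis_dist_le[of \<theta> "2 * pi * of_int k0 / real M"] dist v assms(2)
      by (intro exI[of _ 0]) auto
  next
    case False
    hence "k0 < int M" using k0le by simp
    then obtain k where k: "k0 = int k" "k < M" using k0ge by (metis nonneg_int_cases of_nat_less_iff)
    show ?thesis using cis_dist_le[of \<theta> "2 * pi * of_int k0 / real M"] dist v k
      by (intro exI[of _ k]) auto
  qed
qed

lemma polar_ident:
  fixes v1 v2 :: complex and t1 t2 :: real
  assumes "cmod v1 = 1" "cmod v2 = 1"
  shows "(cmod (of_real t1 * v1 - of_real t2 * v2))\<^sup>2 = (t1 - t2)\<^sup>2 + t1 * t2 * (cmod (v1 - v2))\<^sup>2"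
    and "(cmod (1 - (of_real t1 * v1) * cnj (of_real t2 * v2)))\<^sup>2 = (1 - t1 * t2)\<^sup>2 + t1 * t2 * (cmod (v1 - v2))\<^sup>2"
proof -
  have a: "(Re v1)\<^sup>2 + (Im v1)\<^sup>2 = 1" "(Re v2)\<^sup>2 + (Im v2)\<^sup>2 = 1"
    using assms by (simp_all add: cmod_power2 flip: cmod_power2)
  show "(cmod (of_real t1 * v1 - of_real t2 * v2))\<^sup>2 = (t1 - t2)\<^sup>2 + t1 * t2 * (cmod (v1 - v2))\<^sup>2"
    unfolding cmod_power2 using a by (simp add: power2_eq_square algebra_simps) (use a in algebra)
  show "(cmod (1 - (of_real t1 * v1) * cnj (of_real t2 * v2)))\<^sup>2 = (1 - t1 * t2)\<^sup>2 + t1 * t2 * (cmod (v1 - v2))\<^sup>2"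
    unfolding cmod_power2 using a by (simp add: power2_eq_square algebra_simps) (use a in algebra)
qed

definition xf :: "real \<Rightarrow> real" where "xf t = (1 - t) / (1 + t)"

definition upiece :: "real \<Rightarrow> real \<Rightarrow> real \<Rightarrow> complex \<Rightarrow> complex set" where
  "upiece a y \<eta> e = {u. y < xf (cmod u) \<and> (1 - a) * xf (cmod u) < (1 + a) * y
      \<and> cmod (u - of_real (cmod u) * e) < \<eta> * cmod u}"

lemma xf_inv: "t \<ge> 0 \<Longrightarrow> t = (1 - xf t) / (1 + xf t)"
  unfolding xf_def by (simp add: field_simps)

lemma x_alg:
  fixes x1 x2 :: real
  assumes "x1 > 0" "x2 > 0"
  shows "(1 - x1) / (1 + x1) - (1 - x2) / (1 + x2) = 2 * (x2 - x1) / ((1 + x1) * (1 + x2))"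
    and "1 - (1 - x1) / (1 + x1) * ((1 - x2) / (1 + x2)) = 2 * (x1 + x2) / ((1 + x1) * (1 + x2))"
    and "(1 - x1) / (1 + x1) * ((1 - x2) / (1 + x2)) = (1 - x1) * (1 - x2) / ((1 + x1) * (1 + x2))"
proof -
  have "1 + x1 \<noteq> 0" "1 + x2 \<noteq> 0" using assms by auto
  thus "(1 - x1) / (1 + x1) - (1 - x2) / (1 + x2) = 2 * (x2 - x1) / ((1 + x1) * (1 + x2))"
    and "1 - (1 - x1) / (1 + x1) * ((1 - x2) / (1 + x2)) = 2 * (x1 + x2) / ((1 + x1) * (1 + x2))"
    and "(1 - x1) / (1 + x1) * ((1 - x2) / (1 + x2)) = (1 - x1) * (1 - x2) / ((1 + x1) * (1 + x2))"
    by (simp_all add: divide_simps) (simp_all add: algebra_simps)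
qed

lemma radial_bound:
  fixes x1 x2 y a :: real
  assumes "x1 > y" "x2 > y" "y > 0" "(1 - a) * x1 < (1 + a) * y" "(1 - a) * x2 < (1 + a) * y" "a \<ge> 0"
  defines "t1 \<equiv> (1 - x1) / (1 + x1)" and "t2 \<equiv> (1 - x2) / (1 + x2)"
  shows "(t1 - t2)\<^sup>2 \<le> a\<^sup>2 * (1 - t1 * t2)\<^sup>2"
proof -
  have m1: "(1 + a) * y \<le> (1 + a) * x1" using assms by (intro mult_left_mono) auto
  have m2: "(1 + a) * y \<le> (1 + a) * x2" using assms by (intro mult_left_mono) auto
  have c1: "(1 - a) * x2 < (1 + a) * x1" using m1 assms(5) by linarith
  have c2: "(1 - a) * x1 < (1 + a) * x2" using m2 assms(4) by linarith
  have h1: "x2 - x1 \<le> a * (x1 + x2)" using c1 by (simp add: algebra_simps)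
  have h2: "x1 - x2 \<le> a * (x1 + x2)" using c2 by (simp add: algebra_simps)
  have h: "\<bar>x2 - x1\<bar> \<le> a * (x1 + x2)" using h1 h2 by (simp add: abs_le_iff)
  have "(t1 - t2)\<^sup>2 = (2 * (x2 - x1) / ((1 + x1) * (1 + x2)))\<^sup>2"
    using x_alg(1)[of x1 x2] assms by simp
  also have "\<dots> = (2 / ((1 + x1) * (1 + x2)))\<^sup>2 * \<bar>x2 - x1\<bar>\<^sup>2" by (simp add: power2_eq_square algebra_simps)
  also have "\<dots> \<le> (2 / ((1 + x1) * (1 + x2)))\<^sup>2 * (a * (x1 + x2))\<^sup>2"
    using h by (intro mult_left_mono power_mono) auto
  also have "\<dots> = a\<^sup>2 * (2 * (x1 + x2) / ((1 + x1) * (1 + x2)))\<^sup>2"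
    by (simp add: power_mult_distrib power_divide mult_ac) (simp add: power2_eq_square algebra_simps)
  also have "\<dots> = a\<^sup>2 * (1 - t1 * t2)\<^sup>2"
    using x_alg(2)[of x1 x2] assms by simp
  finally show ?thesis .
qed

lemma angular_bound:
  fixes x1 x2 y :: real
  assumes "x1 > y" "x2 > y" "y > 0" "x1 \<le> 1" "x2 \<le> 1"
  defines "t1 \<equiv> (1 - x1) / (1 + x1)" and "t2 \<equiv> (1 - x2) / (1 + x2)"
  shows "16 * y\<^sup>2 * (t1 * t2) \<le> (1 - t1 * t2)\<^sup>2 * (1 - y\<^sup>2)\<^sup>2"
proof -
  have q: "(1 + x1) * (1 + x2) > 0" using assms by simp
  have e1: "1 - x1\<^sup>2 \<le> 1 - y\<^sup>2" "1 - x2\<^sup>2 \<le> 1 - y\<^sup>2" using assms by (auto intro!: power_strict_mono less_imp_le)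
  have e0: "0 \<le> 1 - x1\<^sup>2" "0 \<le> 1 - x2\<^sup>2" using assms by (auto simp: power_le_one)
  have p1: "(1 - x1\<^sup>2) * (1 - x2\<^sup>2) \<le> (1 - y\<^sup>2) * (1 - y\<^sup>2)"
    using e1 e0 by (intro mult_mono) auto
  have "(2 * y)\<^sup>2 \<le> (x1 + x2)\<^sup>2" using assms by (intro power_mono) auto
  hence s: "4 * y\<^sup>2 \<le> (x1 + x2)\<^sup>2" by (simp add: power_mult_distrib)
  have "4 * y\<^sup>2 * ((1 - x1\<^sup>2) * (1 - x2\<^sup>2)) \<le> (x1 + x2)\<^sup>2 * ((1 - y\<^sup>2) * (1 - y\<^sup>2))"
    by (rule mult_mono[OF s p1]) (auto intro: mult_nonneg_nonneg e0)
  hence key: "4 * y\<^sup>2 * ((1 - x1) * (1 - x2)) * ((1 + x1) * (1 + x2)) \<le> (x1 + x2)\<^sup>2 * (1 - y\<^sup>2)\<^sup>2"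
    by (simp add: power2_eq_square algebra_simps)
  define Q where "Q = (1 + x1) * (1 + x2)"
  have Q: "Q > 0" using q by (simp add: Q_def)
  have "16 * y\<^sup>2 * (t1 * t2) = 16 * y\<^sup>2 * ((1 - x1) * (1 - x2) / Q)"
    using x_alg(3)[of x1 x2] assms by (simp add: Q_def)
  also have "\<dots> = 16 * y\<^sup>2 * ((1 - x1) * (1 - x2)) * Q / Q\<^sup>2"
    using Q by (simp add: power2_eq_square)
  finally have "16 * y\<^sup>2 * (t1 * t2) = 16 * y\<^sup>2 * ((1 - x1) * (1 - x2)) * ((1 + x1) * (1 + x2)) / ((1 + x1) * (1 + x2))\<^sup>2"
    by (simp add: Q_def)
  also have "\<dots> \<le> 4 * (x1 + x2)\<^sup>2 * (1 - y\<^sup>2)\<^sup>2 / ((1 + x1) * (1 + x2))\<^sup>2"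
  proof (rule divide_right_mono)
    show "16 * y\<^sup>2 * ((1 - x1) * (1 - x2)) * ((1 + x1) * (1 + x2)) \<le> 4 * (x1 + x2)\<^sup>2 * (1 - y\<^sup>2)\<^sup>2"
      using key by linarith
  qed simp
  also have "\<dots> = (2 * (x1 + x2) / ((1 + x1) * (1 + x2)))\<^sup>2 * (1 - y\<^sup>2)\<^sup>2"
    by (simp add: power_divide power_mult_distrib) (simp add: power2_eq_square algebra_simps)
  also have "\<dots> = (1 - t1 * t2)\<^sup>2 * (1 - y\<^sup>2)\<^sup>2"
    using x_alg(2)[of x1 x2] assms by simp
  finally show ?thesis .
qed


lemma xf_le1: "t \<ge> 0 \<Longrightarrow> xf t \<le> 1"
  unfolding xf_def by (simp add: divide_le_eq_1)

lemma piece_diam: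
  fixes \<alpha> y \<eta> :: real and e u1 u2 :: complex
  assumes al: "0 < \<alpha>" "\<alpha> < 1" and y: "0 < y" "y < 1" and e: "cmod e = 1"
    and eta: "\<eta> = 8/5 * \<alpha> * y / (sqrt (1 - \<alpha>\<^sup>2) * (1 - y\<^sup>2))"
    and u1: "u1 \<in> upiece (3/5 * \<alpha>) y \<eta> e" and u2: "u2 \<in> upiece (3/5 * \<alpha>) y \<eta> e"
  shows "cmod (u1 - u2) \<le> \<alpha> * cmod (1 - u1 * cnj u2)"
proof -
  define a where "a = 3/5 * \<alpha>"
  have s2: "(sqrt (1 - \<alpha>\<^sup>2))\<^sup>2 = 1 - \<alpha>\<^sup>2" using al by (simp add: power_le_one)
  have spos: "sqrt (1 - \<alpha>\<^sup>2) > 0" using al by (simp add: abs_square_less_1)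
  have y2: "1 - y\<^sup>2 > 0" using y by (simp add: abs_square_less_1)
  have etapos: "\<eta> > 0" unfolding eta using al y spos y2 by simp
  have eta2: "\<eta>\<^sup>2 = 64/25 * \<alpha>\<^sup>2 * y\<^sup>2 / ((1 - \<alpha>\<^sup>2) * (1 - y\<^sup>2)\<^sup>2)"
    unfolding eta by (simp add: power_divide power_mult_distrib s2)
  define t1 where "t1 = cmod u1"
  define t2 where "t2 = cmod u2"
  define x1 where "x1 = xf t1"
  define x2 where "x2 = xf t2"
  have U1: "y < x1" "(1 - a) * x1 < (1 + a) * y" "cmod (u1 - of_real t1 * e) < \<eta> * t1"
    using u1 unfolding upiece_def x1_def t1_def a_def by auto
  have U2: "y < x2" "(1 - a) * x2 < (1 + a) * y" "cmod (u2 - of_real t2 * e) < \<eta> * t2"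
    using u2 unfolding upiece_def x2_def t2_def a_def by auto
  have t1pos: "t1 > 0"
  proof (rule ccontr)
    assume "\<not> t1 > 0"
    hence "t1 = 0" using t1_def by simp
    with U1(3) show False by simp
  qed
  have t2pos: "t2 > 0"
  proof (rule ccontr)
    assume "\<not> t2 > 0"
    hence "t2 = 0" using t2_def by simp
    with U2(3) show False by simp
  qed
  have x1le: "x1 \<le> 1" "x2 \<le> 1" using xf_le1 t1pos t2pos by (auto simp: x1_def x2_def)
  have t1x: "t1 = (1 - x1) / (1 + x1)" using xf_inv t1pos x1_def by auto
  have t2x: "t2 = (1 - x2) / (1 + x2)" using xf_inv t2pos x2_def by auto
  define v1 where "v1 = u1 / of_real t1"
  define v2 where "v2 = u2 / of_real t2"
  have v1: "cmod v1 = 1" "u1 = of_real t1 * v1" using t1pos by (auto simp: v1_def t1_def norm_divide)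
  have v2: "cmod v2 = 1" "u2 = of_real t2 * v2" using t2pos by (auto simp: v2_def t2_def norm_divide)
  have "cmod (u1 - of_real t1 * e) = t1 * cmod (v1 - e)"
  proof -
    have "u1 - of_real t1 * e = of_real t1 * (v1 - e)" using v1(2) by (simp add: algebra_simps)
    thus ?thesis using t1pos by (simp add: norm_mult)
  qed
  hence c1: "cmod (v1 - e) < \<eta>" using U1(3) t1pos by simp
  have "cmod (u2 - of_real t2 * e) = t2 * cmod (v2 - e)"
  proof -
    have "u2 - of_real t2 * e = of_real t2 * (v2 - e)" using v2(2) by (simp add: algebra_simps)
    thus ?thesis using t2pos by (simp add: norm_mult)
  qed
  hence c2: "cmod (v2 - e) < \<eta>" using U2(3) t2pos by simp
  have "cmod (v1 - v2) \<le> cmod (v1 - e) + cmod (v2 - e)"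
    using norm_triangle_ineq4[of "v1 - e" "v2 - e"] by simp
  hence "cmod (v1 - v2) \<le> 2 * \<eta>" using c1 c2 by simp
  hence D: "(cmod (v1 - v2))\<^sup>2 \<le> 4 * \<eta>\<^sup>2"
    using power_mono[of "cmod (v1 - v2)" "2 * \<eta>" 2] by (simp add: power_mult_distrib)
  define p where "p = t1 * t2"
  define D where "D = (cmod (v1 - v2))\<^sup>2"
  have ppos: "p \<ge> 0" using t1pos t2pos by (simp add: p_def)
  have Dpos: "D \<ge> 0" by (simp add: D_def)
  have rad: "(t1 - t2)\<^sup>2 \<le> a\<^sup>2 * (1 - p)\<^sup>2"
    unfolding t1x t2x p_def by (rule radial_bound) (use U1 U2 y al in \<open>auto simp: a_def\<close>)
  have ang: "16 * y\<^sup>2 * p \<le> (1 - p)\<^sup>2 * (1 - y\<^sup>2)\<^sup>2"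
    unfolding t1x t2x p_def by (rule angular_bound) (use U1 U2 y x1le in auto)
  have "(1 - \<alpha>\<^sup>2) * p * D \<le> (1 - \<alpha>\<^sup>2) * p * (4 * \<eta>\<^sup>2)"
    using D al ppos by (intro mult_left_mono) (auto simp: D_def power_le_one)
  also have "\<dots> = 256/25 * \<alpha>\<^sup>2 * (y\<^sup>2 * p) / (1 - y\<^sup>2)\<^sup>2"
  proof -
    have "\<alpha>\<^sup>2 < 1" using al by (simp add: abs_square_less_1)
    hence "1 - \<alpha>\<^sup>2 \<noteq> 0" "\<alpha>\<^sup>2 \<noteq> 1" by auto
    thus ?thesis unfolding eta2 by (simp add: divide_simps)
  qed
  also have "\<dots> \<le> 256/25 * \<alpha>\<^sup>2 * ((1 - p)\<^sup>2 * (1 - y\<^sup>2)\<^sup>2 / 16) / (1 - y\<^sup>2)\<^sup>2"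
    using ang by (intro divide_right_mono mult_left_mono) auto
  also have "\<dots> = 16/25 * \<alpha>\<^sup>2 * (1 - p)\<^sup>2" using y2 by simp
  finally have angD: "(1 - \<alpha>\<^sup>2) * p * D \<le> 16/25 * \<alpha>\<^sup>2 * (1 - p)\<^sup>2" .
  have "(cmod (u1 - u2))\<^sup>2 = (t1 - t2)\<^sup>2 + p * D"
    using polar_ident(1)[OF v1(1) v2(1), of t1 t2] unfolding v1(2)[symmetric] v2(2)[symmetric] p_def D_def .
  also have "\<dots> \<le> \<alpha>\<^sup>2 * ((1 - p)\<^sup>2 + p * D)"
  proof -
    have r: "(t1 - t2)\<^sup>2 \<le> 9/25 * (\<alpha>\<^sup>2 * (1 - p)\<^sup>2)" using rad by (simp add: a_def power_mult_distrib power_divide)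
    have q: "p * D - \<alpha>\<^sup>2 * (p * D) \<le> 16/25 * (\<alpha>\<^sup>2 * (1 - p)\<^sup>2)" using angD by (simp add: algebra_simps)
    have "\<alpha>\<^sup>2 * ((1 - p)\<^sup>2 + p * D) = \<alpha>\<^sup>2 * (1 - p)\<^sup>2 + \<alpha>\<^sup>2 * (p * D)" by (simp add: distrib_left)
    thus ?thesis using r q by linarith
  qed
  also have "\<dots> = (\<alpha> * cmod (1 - u1 * cnj u2))\<^sup>2"
  proof -
    have "(cmod (1 - u1 * cnj u2))\<^sup>2 = (1 - p)\<^sup>2 + p * D"
      using polar_ident(2)[OF v1(1) v2(1), of t1 t2] unfolding v1(2)[symmetric] v2(2)[symmetric] p_def D_def .
    thus ?thesis by (simp add: power_mult_distrib)
  qed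
  finally have fin: "(cmod (u1 - u2))\<^sup>2 \<le> (\<alpha> * cmod (1 - u1 * cnj u2))\<^sup>2" .
  have "0 \<le> \<alpha> * cmod (1 - u1 * cnj u2)" using al by simp
  thus ?thesis by (rule power2_le_imp_le[OF fin])
qed

lemma poly_step:
  fixes a y :: real
  assumes "0 < a" "a < 1" "0 < y" "y < 1"
  shows "(2 + a) * ((2 - a\<^sup>2) * (1 - y\<^sup>2) + a * y) \<le> 5"
proof -
  have h1: "0 \<le> (1 - a\<^sup>2) * y\<^sup>2" using assms by (simp add: abs_square_le_1)
  have h2: "0 \<le> (y - a/2)\<^sup>2" by simp
  have "(2 - a\<^sup>2) * (1 - y\<^sup>2) + a * y \<le> 2 - 3/4 * a\<^sup>2"
    using h1 h2 by (simp add: power2_eq_square algebra_simps)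
  hence "(2 + a) * ((2 - a\<^sup>2) * (1 - y\<^sup>2) + a * y) \<le> (2 + a) * (2 - 3/4 * a\<^sup>2)"
    using assms by (intro mult_left_mono) auto
  also have "\<dots> \<le> 5"
  proof -
    have e1: "(a - 2/3)\<^sup>2 = a\<^sup>2 - 4/3 * a + 4/9" by (simp add: power2_eq_square algebra_simps)
    have e2: "(2 + a) * (2 - 3/4 * a\<^sup>2) = 4 + 2 * a - 3/2 * a\<^sup>2 - 3/4 * a^3"
      by (simp add: power2_eq_square power3_eq_cube algebra_simps)
    have "0 \<le> (a - 2/3)\<^sup>2" by simp
    moreover have "0 \<le> a^3" using assms by simp
    ultimately show ?thesis using e1 e2 by linarith
  qed
  finally show ?thesis .
qed

lemma poly_base:
  fixes a :: real
  assumes "0 < a" "a < 1"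
  shows "0 \<le> 50 - 85 * a + 44 * a^3"
proof -
  have e: "(a - 4/5)\<^sup>2 * (a + 8/5) = a^3 - 48/25 * a + 128/125"
    by (simp add: power2_eq_square power3_eq_cube field_simps)
  have "0 \<le> (a - 4/5)\<^sup>2 * (a + 8/5)" using assms by simp
  thus ?thesis using assms e by linarith
qed


lemma poly_g:
  fixes a :: real
  assumes "0 < a" "a < 1"
  shows "0 \<le> 5 + 2 * a\<^sup>2 - 4 * a * (2 - a\<^sup>2)"
proof -
  have e: "(a - 2/3)\<^sup>2 * (4 * a + 22/3) = 4 * a^3 + 2 * a\<^sup>2 - 8 * a + 88/27"
    by (simp add: power2_eq_square power3_eq_cube field_simps)
  have e2: "4 * a * (2 - a\<^sup>2) = 8 * a - 4 * a^3" by (simp add: power2_eq_square power3_eq_cube field_simps)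
  have "0 \<le> (a - 2/3)\<^sup>2 * (4 * a + 22/3)" using assms by simp
  thus ?thesis using e e2 by linarith
qed

lemma base_poly:
  fixes a y :: real
  assumes a: "0 < a" "a < 1" and y: "0 < y" "y \<le> (5 - 2 * a) / (5 + 2 * a)"
  shows "2 * a * (2 - a\<^sup>2) * (1 - y\<^sup>2) + 2 * a\<^sup>2 * y \<le> 5 * (1 - y)"
proof -
  define X where "X = (5 - 2 * a) / (5 + 2 * a)"
  define f where "f = (\<lambda>y. 5 * (1 - y) - 2 * a * (2 - a\<^sup>2) * (1 - y\<^sup>2) - 2 * a\<^sup>2 * y)"
  have d: "5 + 2 * a > 0" using a by simp
  have X1: "X \<le> 1" unfolding X_def using d a by (simp add: divide_le_eq_1)
  have id: "f y - f X = (X - y) * (5 + 2 * a\<^sup>2 - 2 * a * (2 - a\<^sup>2) * (y + X))"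
    unfolding f_def by (simp add: power2_eq_square algebra_simps)
  have "a\<^sup>2 \<le> 1" using a by (simp add: abs_square_le_1)
  hence k: "0 \<le> a * (2 - a\<^sup>2)" using a by (intro mult_nonneg_nonneg) auto
  define K where "K = a * (2 - a\<^sup>2)"
  have "K * (y + X) \<le> K * 2"
    using k y X1 unfolding X_def[symmetric] K_def[symmetric] by (intro mult_left_mono) auto
  moreover have "4 * K \<le> 5 + 2 * a\<^sup>2" using poly_g[OF a] by (simp add: K_def mult.assoc)
  moreover have "2 * a * (2 - a\<^sup>2) * (y + X) = 2 * (K * (y + X))" by (simp add: K_def)
  ultimately have "0 \<le> 5 + 2 * a\<^sup>2 - 2 * a * (2 - a\<^sup>2) * (y + X)" by linarith
  moreover have "0 \<le> X - y" using y by (simp add: X_def)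
  ultimately have "0 \<le> (X - y) * (5 + 2 * a\<^sup>2 - 2 * a * (2 - a\<^sup>2) * (y + X))" by simp
  hence m: "f X \<le> f y" using id by simp
  have fX: "f X * (5 + 2 * a)\<^sup>2 = 2 * a * (50 - 85 * a + 44 * a^3)"
  proof -
    define D where "D = 5 + 2 * a"
    have D: "D \<noteq> 0" using d by (simp add: D_def)
    have x1: "(1 - X) * D = 4 * a" unfolding X_def D_def[symmetric] using D by (simp add: field_simps D_def)
    have x3: "X * D = 5 - 2 * a" unfolding X_def D_def[symmetric] using D by simp
    have x2: "(1 - X\<^sup>2) * D\<^sup>2 = 40 * a"
    proof -
      have "(1 - X\<^sup>2) * D\<^sup>2 = ((1 - X) * D) * ((1 + X) * D)" by (simp add: power2_eq_square algebra_simps)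
      also have "(1 + X) * D = 10" using x3 by (simp add: algebra_simps D_def)
      finally show ?thesis using x1 by simp
    qed
    have "f X * D\<^sup>2 = 5 * ((1 - X) * D) * D - 2 * a * (2 - a\<^sup>2) * ((1 - X\<^sup>2) * D\<^sup>2) - 2 * a\<^sup>2 * (X * D) * D"
      unfolding f_def by (simp add: power2_eq_square algebra_simps)
    also have "\<dots> = 2 * a * (50 - 85 * a + 44 * a^3)"
      unfolding x1 x2 x3 by (simp add: D_def power2_eq_square power3_eq_cube algebra_simps)
    finally show ?thesis by (simp add: D_def)
  qed
  have "0 \<le> 2 * a * (50 - 85 * a + 44 * a^3)" using poly_base[OF a] a by simp
  hence "0 \<le> f X" using fX d by (metis zero_le_mult_iff zero_less_power not_le)
  with m have "0 \<le> f y" by simp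
  thus ?thesis unfolding f_def by simp
qed


lemma step_ineq:
  fixes a y :: real
  assumes a: "0 < a" "a < 1" and y: "0 < y" "y < 1"
  shows "(2 - a\<^sup>2) * (1 - y\<^sup>2) / (a * y) + 1 + 5 / (2 * a\<^sup>2) * (1 - (2 + a) / (2 - a) * y) / ((2 + a) / (2 - a) * y)
         \<le> 5 / (2 * a\<^sup>2) * (1 - y) / y"
proof -
  have H: "5 / (2 * a\<^sup>2) * (1 - y) / y - 5 / (2 * a\<^sup>2) * (1 - (2 + a) / (2 - a) * y) / ((2 + a) / (2 - a) * y)
      = 5 / (a * y * (2 + a))"
  proof -
    define L where "L = (2 + a) / (2 - a)"
    define c where "c = 5 / (2 * a\<^sup>2)"
    have L: "L > 0" using a by (simp add: L_def)
    have e1: "c * (1 - y) / y = c * (1 / y) - c" using y by (simp add: field_simps)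
    have e2: "c * (1 - L * y) / (L * y) = c * (1 / y) * (1 / L) - c" using y L by (simp add: field_simps)
    have e3: "1 - 1 / L = 2 * a / (2 + a)" using a by (simp add: L_def field_simps)
    have "c * (1 - y) / y - c * (1 - L * y) / (L * y) = c * (1 / y) * (1 - 1 / L)"
      unfolding e1 e2 by (simp add: algebra_simps)
    also have "\<dots> = 5 / (a * y * (2 + a))"
    proof -
      define d where "d = 2 + a"
      have nz: "d \<noteq> 0" "a \<noteq> 0" "y \<noteq> 0" using a y by (auto simp: d_def)
      have "5 / (2 * a\<^sup>2) * (1 / y) * (2 * a / d) = 5 / (a * y * d)"
        using nz by (simp add: field_simps power2_eq_square)
      thus ?thesis unfolding e3 c_def d_def .
    qed
    finally show ?thesis by (simp add: L_def c_def)
  qed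
  have M: "(2 - a\<^sup>2) * (1 - y\<^sup>2) / (a * y) + 1 = ((2 - a\<^sup>2) * (1 - y\<^sup>2) + a * y) / (a * y)"
    using a y by (simp add: field_simps)
  have "((2 - a\<^sup>2) * (1 - y\<^sup>2) + a * y) / (a * y) \<le> 5 / (a * y * (2 + a))"
  proof -
    have "(2 - a\<^sup>2) * (1 - y\<^sup>2) + a * y \<le> 5 / (2 + a)"
      using poly_step[OF a y] a by (simp add: pos_le_divide_eq mult.commute)
    hence "((2 - a\<^sup>2) * (1 - y\<^sup>2) + a * y) / (a * y) \<le> 5 / (2 + a) / (a * y)"
      using a y by (intro divide_right_mono) auto
    thus ?thesis by (simp add: mult.commute)
  qed
  thus ?thesis using H M by linarith
qed

lemma base_ineq:
  fixes a y :: real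
  assumes a: "0 < a" "a < 1" and y: "0 < y" "y \<le> (5 - 2 * a) / (5 + 2 * a)"
  shows "(2 - a\<^sup>2) * (1 - y\<^sup>2) / (a * y) + 1 \<le> 5 / (2 * a\<^sup>2) * (1 - y) / y"
proof -
  have "(2 - a\<^sup>2) * (1 - y\<^sup>2) / (a * y) + 1 = (2 * a * (2 - a\<^sup>2) * (1 - y\<^sup>2) + 2 * a\<^sup>2 * y) / (2 * a\<^sup>2 * y)"
    using a y by (simp add: field_simps power2_eq_square)
  also have "\<dots> \<le> 5 * (1 - y) / (2 * a\<^sup>2 * y)"
    using base_poly[OF a y] a y by (intro divide_right_mono) auto
  also have "\<dots> = 5 / (2 * a\<^sup>2) * (1 - y) / y" by simp
  finally show ?thesis .
qed

lemma sum_bound: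
  fixes a :: real and M :: "real \<Rightarrow> nat"
  assumes a: "0 < a" "a < 1"
    and Mb: "\<And>y. 0 < y \<Longrightarrow> y < 1 \<Longrightarrow> real (M y) \<le> (2 - a\<^sup>2) * (1 - y\<^sup>2) / (a * y) + 1"
  shows "0 < y \<Longrightarrow> y * ((2 + a) / (2 - a)) ^ n < (5 - 2 * a) / (5 + 2 * a) \<Longrightarrow>
    (5 - 2 * a) / (5 + 2 * a) \<le> y * ((2 + a) / (2 - a)) ^ Suc n \<Longrightarrow>
    (\<Sum>j\<le>n. real (M (y * ((2 + a) / (2 - a)) ^ j))) \<le> 5 / (2 * a\<^sup>2) * (1 - y) / y"
proof (induction n arbitrary: y)
  case 0
  have xc: "(5 - 2 * a) / (5 + 2 * a) < 1" using a by (simp add: divide_less_eq_1)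
  have "real (M y) \<le> (2 - a\<^sup>2) * (1 - y\<^sup>2) / (a * y) + 1" using Mb 0 xc by simp
  also have "\<dots> \<le> 5 / (2 * a\<^sup>2) * (1 - y) / y" using base_ineq[OF a] 0 by simp
  finally show ?case by simp
next
  case (Suc n)
  define l where "l = (2 + a) / (2 - a)"
  have l1: "l \<ge> 1" using a by (simp add: l_def)
  have xc: "(5 - 2 * a) / (5 + 2 * a) < 1" using a by (simp add: divide_less_eq_1)
  have ly: "0 < y * l" using Suc.prems l1 by simp
  have IH: "(\<Sum>j\<le>n. real (M ((y * l) * l ^ j))) \<le> 5 / (2 * a\<^sup>2) * (1 - l * y) / (l * y)"
    using Suc.IH[of "y * l"] Suc.prems ly by (simp add: l_def mult.assoc mult.commute)
  have p2: "y * l ^ Suc n < (5 - 2 * a) / (5 + 2 * a)" by (unfold l_def) (rule Suc.prems(2))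
  have "l ^ 1 \<le> l ^ Suc n" using l1 by (intro power_increasing) auto
  hence "y * l \<le> y * l ^ Suc n" using Suc.prems(1) by (intro mult_left_mono) auto
  hence yl: "y * l < (5 - 2 * a) / (5 + 2 * a)" using p2 by linarith
  have "y \<le> y * l" using l1 Suc.prems(1) by simp
  hence y1: "y < 1" using yl xc by linarith
  have "(\<Sum>j\<le>Suc n. real (M (y * l ^ j))) = real (M y) + (\<Sum>j\<le>n. real (M ((y * l) * l ^ j)))"
    by (simp add: sum.atMost_Suc_shift mult.assoc del: sum.atMost_Suc)
  also have "\<dots> \<le> (2 - a\<^sup>2) * (1 - y\<^sup>2) / (a * y) + 1 + 5 / (2 * a\<^sup>2) * (1 - l * y) / (l * y)"
    using Mb[OF Suc.prems(1) y1] IH by linarith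
  also have "\<dots> \<le> 5 / (2 * a\<^sup>2) * (1 - y) / y"
    using step_ineq[OF a Suc.prems(1) y1] by (simp add: l_def)
  finally show ?case by (simp add: l_def)
qed

lemma disk_diam_le:
  assumes "\<alpha> \<ge> 0" "\<And>z w. z \<in> W \<Longrightarrow> w \<in> W \<Longrightarrow> disk_dist r1 z w \<le> \<alpha>"
  shows "disk_diam r1 W \<le> \<alpha>"
  unfolding disk_diam_def using assms by (intro cSup_least) auto

lemma disk_dist_from_unit:
  fixes z w :: complex
  assumes r1: "r1 > 0" and al: "\<alpha> \<ge> 0"
    and h: "cmod (z / of_real r1 - w / of_real r1) \<le> \<alpha> * cmod (1 - (z / of_real r1) * cnj (w / of_real r1))"
  shows "disk_dist r1 z w \<le> \<alpha>"
proof -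
  define u where "u = z / of_real r1"
  define u' where "u' = w / of_real r1"
  have z: "z = of_real r1 * u" and w: "w = of_real r1 * u'" using r1 by (auto simp: u_def u'_def)
  have "of_real r1 * (z - w) / (of_real (r1\<^sup>2) - z * cnj w) = (of_real r1)\<^sup>2 * (u - u') / ((of_real r1)\<^sup>2 * (1 - u * cnj u'))"
    unfolding z w by (simp add: algebra_simps power2_eq_square)
  also have "\<dots> = (u - u') / (1 - u * cnj u')" using r1 by simp
  finally have e: "disk_dist r1 z w = cmod (u - u') / cmod (1 - u * cnj u')"
    unfolding disk_dist_def by (simp add: norm_divide)
  have h': "cmod (u - u') \<le> \<alpha> * cmod (1 - u * cnj u')" using h by (simp add: u_def u'_def)
  show ?thesis
  proof (cases "cmod (1 - u * cnj u') = 0")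
    case True thus ?thesis using e al by simp
  next
    case False
    hence "cmod (1 - u * cnj u') > 0" by simp
    thus ?thesis using e h' by (simp add: divide_le_eq)
  qed
qed

lemma family_to_W:
  fixes F :: "complex set set" and N :: nat
  assumes fin: "finite F" and card: "card F \<le> N" and al: "\<alpha> \<ge> 0"
    and good: "\<And>S. S \<in> F \<Longrightarrow> open S \<and> S \<subseteq> ball 0 r1 \<and> disk_diam r1 S \<le> \<alpha>"
    and cov: "ball 0 r \<subseteq> \<Union>F"
  shows "\<exists>W :: nat \<Rightarrow> complex set.
           (\<forall>i\<in>{1..N}. open (W i) \<and> W i \<subseteq> ball 0 r1 \<and> disk_diam r1 (W i) \<le> \<alpha>)
         \<and> ball 0 r \<subseteq> (\<Union>i\<in>{1..N}. W i)"
proof -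
  obtain xs where xs: "set xs = F" "distinct xs" using finite_distinct_list[OF fin] by blast
  have len: "length xs \<le> N" using xs card distinct_card by metis
  define W where "W i = (if 1 \<le> i \<and> i \<le> length xs then xs ! (i - 1) else {})" for i
  have e: "disk_diam r1 {} = 0" unfolding disk_diam_def by simp
  have "\<forall>i\<in>{1..N}. open (W i) \<and> W i \<subseteq> ball 0 r1 \<and> disk_diam r1 (W i) \<le> \<alpha>"
  proof
    fix i assume "i \<in> {1..N}"
    show "open (W i) \<and> W i \<subseteq> ball 0 r1 \<and> disk_diam r1 (W i) \<le> \<alpha>"
    proof (cases "1 \<le> i \<and> i \<le> length xs")
      case True
      hence "xs ! (i - 1) \<in> F" using xs(1) by auto
      thus ?thesis using good True by (simp add: W_def)
    next
      case False thus ?thesis using e al by (auto simp: W_def)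
    qed
  qed
  moreover have "ball 0 r \<subseteq> (\<Union>i\<in>{1..N}. W i)"
  proof
    fix z :: complex assume "z \<in> ball 0 r"
    then obtain S where S: "S \<in> F" "z \<in> S" using cov by blast
    then obtain k where k: "k < length xs" "xs ! k = S" using xs(1) by (metis in_set_conv_nth)
    have "W (Suc k) = S" using k by (simp add: W_def)
    moreover have "Suc k \<in> {1..N}" using k len by simp
    ultimately show "z \<in> (\<Union>i\<in>{1..N}. W i)" using S by blast
  qed
  ultimately show ?thesis by blast
qed

lemma xf_less: "0 \<le> s \<Longrightarrow> s < t \<Longrightarrow> xf t < xf s"
  unfolding xf_def by (simp add: field_simps)

lemma exists_band:
  fixes x0 l x :: real
  assumes "x0 > 0" "l > 1" "x > x0"
  shows "\<exists>j. x0 * l ^ j < x \<and> x \<le> x0 * l ^ Suc j"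
proof -
  obtain n where n: "x / x0 < l ^ n" using real_arch_pow[OF assms(2)] by blast
  hence ex: "\<exists>n. x \<le> x0 * l ^ n" using assms(1) by (intro exI[of _ n]) (simp add: divide_less_eq mult.commute less_imp_le)
  define n0 where "n0 = (LEAST n. x \<le> x0 * l ^ n)"
  have n0: "x \<le> x0 * l ^ n0" unfolding n0_def by (rule LeastI_ex[OF ex])
  have "n0 \<noteq> 0"
  proof
    assume "n0 = 0"
    with n0 assms(3) show False by simp
  qed
  then obtain j where j: "n0 = Suc j" by (cases n0) auto
  have "\<not> x \<le> x0 * l ^ j" unfolding n0_def using j n0_def by (metis lessI not_less_Least)
  thus ?thesis using n0 j by (intro exI[of _ j]) auto
qed

lemma Mb_lemma:
  fixes \<alpha> y :: real
  assumes al: "0 < \<alpha>" "\<alpha> < 1" and y: "0 < y" "y < 1"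
  shows "real (nat \<lfloor>pi / (8/5 * \<alpha> * y / (sqrt (1 - \<alpha>\<^sup>2) * (1 - y\<^sup>2)))\<rfloor> + 1) \<le> (2 - \<alpha>\<^sup>2) * (1 - y\<^sup>2) / (\<alpha> * y) + 1"
proof -
  define s where "s = sqrt (1 - \<alpha>\<^sup>2)"
  have a2: "\<alpha>\<^sup>2 < 1" using al by (simp add: abs_square_less_1)
  have y2: "y\<^sup>2 < 1" using y by (simp add: abs_square_less_1)
  have spos: "s > 0" using a2 by (simp add: s_def)
  have sle: "s \<le> 1 - \<alpha>\<^sup>2 / 2"
  proof -
    have "0 \<le> \<alpha> * (\<alpha> * (\<alpha> * \<alpha>))" using al by simp
    hence "1 - \<alpha>\<^sup>2 \<le> (1 - \<alpha>\<^sup>2 / 2)\<^sup>2" by (simp add: power2_eq_square algebra_simps)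
    hence "s \<le> sqrt ((1 - \<alpha>\<^sup>2 / 2)\<^sup>2)" unfolding s_def by (rule real_sqrt_le_mono)
    thus ?thesis using a2 by simp
  qed
  have e: "pi / (8/5 * \<alpha> * y / (s * (1 - y\<^sup>2))) = (pi * s) * (1 - y\<^sup>2) / (8/5 * \<alpha> * y)"
    using al y by (simp add: field_simps)
  have nn: "0 \<le> pi / (8/5 * \<alpha> * y / (s * (1 - y\<^sup>2)))" using al y y2 spos by simp
  have ps: "pi * s \<le> 8/5 * (2 - \<alpha>\<^sup>2)"
  proof -
    have "pi * s \<le> 16/5 * s" using pi_approx(2) spos by (intro mult_right_mono) auto
    also have "\<dots> \<le> 16/5 * (1 - \<alpha>\<^sup>2 / 2)" using sle by simp
    finally show ?thesis by (simp add: algebra_simps)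
  qed
  have "(pi * s) * (1 - y\<^sup>2) / (8/5 * \<alpha> * y) \<le> (8/5 * (2 - \<alpha>\<^sup>2)) * (1 - y\<^sup>2) / (8/5 * \<alpha> * y)"
    using ps al y y2 by (intro divide_right_mono mult_right_mono) auto
  also have "\<dots> = (2 - \<alpha>\<^sup>2) * (1 - y\<^sup>2) / (\<alpha> * y)" using al y by (simp add: field_simps)
  finally have "pi / (8/5 * \<alpha> * y / (s * (1 - y\<^sup>2))) \<le> (2 - \<alpha>\<^sup>2) * (1 - y\<^sup>2) / (\<alpha> * y)" using e by simp
  moreover have "real (nat \<lfloor>pi / (8/5 * \<alpha> * y / (s * (1 - y\<^sup>2)))\<rfloor>) \<le> pi / (8/5 * \<alpha> * y / (s * (1 - y\<^sup>2)))"
    using of_nat_floor[OF nn] by simp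
  ultimately show ?thesis unfolding s_def by simp
qed

lemma M_big:
  fixes q :: real
  assumes "q \<ge> 0"
  shows "q < real (nat \<lfloor>q\<rfloor> + 1)"
  using assms by (simp add: of_nat_floor) linarith

theorem mainTheorem12:
  fixes \<epsilon> r r1 \<alpha> :: real and N :: nat
  assumes "\<epsilon> > 0" and "r > 0" and "r1 = (1 + \<epsilon>) * r"
    and "0 < \<alpha>" and "\<alpha> < 1"
    and "real N > 5 / (\<alpha>^2 * \<epsilon>)"
  shows "\<exists>W :: nat \<Rightarrow> complex set.
           (\<forall>i\<in>{1..N}. open (W i) \<and> W i \<subseteq> ball 0 r1 \<and> disk_diam r1 (W i) \<le> \<alpha>)
         \<and> ball 0 r \<subseteq> (\<Union>i\<in>{1..N}. W i)"
proof -
  note ep = assms(1) and rpos = assms(2) and r1def = assms(3) and al = assms(4,5) and Nbig = assms(6)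
  have r1: "r1 > 0" using ep rpos r1def by simp
  define c where "c = 2/5 * \<alpha>"
  define xc where "xc = (5 - 2 * \<alpha>) / (5 + 2 * \<alpha>)"
  define x0 where "x0 = \<epsilon> / (2 + \<epsilon>)"
  define l where "l = (2 + \<alpha>) / (2 - \<alpha>)"
  define eta where "eta y = 8/5 * \<alpha> * y / (sqrt (1 - \<alpha>\<^sup>2) * (1 - y\<^sup>2))" for y
  define M where "M y = nat \<lfloor>pi / eta y\<rfloor> + 1" for y
  define ee where "ee m k = exp (\<i> * of_real (2 * pi * real k / real m))" for m k :: nat
  define Pc where "Pc = ball (0::complex) (c * r1)"
  define P where "P j k = {z. z / of_real r1 \<in> upiece (3/5 * \<alpha>) (x0 * l ^ j) (eta (x0 * l ^ j)) (ee (M (x0 * l ^ j)) k)}" for j k :: nat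
  have cpos: "0 < c" "c < 1" using al by (auto simp: c_def)
  have x0pos: "0 < x0" using ep by (simp add: x0_def)
  have l1: "l > 1" using al by (simp add: l_def)
  have xc1: "xc < 1" "0 < xc" using al by (auto simp: xc_def divide_less_eq_1)
  have xfc: "xf c = xc"
  proof -
    have d: "25 + \<alpha> * 10 \<noteq> 0" "5 + \<alpha> * 2 \<noteq> 0" using al by auto
    show ?thesis unfolding xf_def c_def xc_def by (simp add: field_simps) (simp add: frac_eq_eq d algebra_simps)
  qed
  have xfr: "xf (1 / (1 + \<epsilon>)) = x0"
  proof -
    have d: "\<epsilon> * \<epsilon> + (2 + \<epsilon> * 3) \<noteq> 0" using ep by (smt (verit) mult_pos_pos)
    show ?thesis unfolding xf_def x0_def using ep by (simp add: field_simps) (simp add: divide_eq_eq d algebra_simps)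
  qed
  have ee1: "cmod (ee m k) = 1" for m k by (simp add: ee_def)
  have Mb: "real (M y) \<le> (2 - \<alpha>\<^sup>2) * (1 - y\<^sup>2) / (\<alpha> * y) + 1" if "0 < y" "y < 1" for y
    using Mb_lemma[OF al that] by (simp add: M_def eta_def)
  have Pc_good: "open Pc \<and> Pc \<subseteq> ball 0 r1 \<and> disk_diam r1 Pc \<le> \<alpha>"
  proof (intro conjI)
    show "open Pc" by (simp add: Pc_def)
    have "c * r1 < r1" using cpos r1 by simp
    thus "Pc \<subseteq> ball 0 r1" by (auto simp: Pc_def)
    show "disk_diam r1 Pc \<le> \<alpha>"
    proof (rule disk_diam_le)
      show "0 \<le> \<alpha>" using al by simp
      fix z w assume zw: "z \<in> Pc" "w \<in> Pc"
      define u where "u = z / of_real r1"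
      define u' where "u' = w / of_real r1"
      have uc: "cmod u < c" "cmod u' < c" using zw r1 by (auto simp: Pc_def u_def u'_def norm_divide divide_less_eq)
      have "cmod (u - u') \<le> cmod u + cmod u'" by (rule norm_triangle_ineq4)
      also have "\<dots> \<le> 2 * c" using uc by simp
      also have "\<dots> \<le> \<alpha> * (1 - c * c)"
      proof -
        have "\<alpha> * \<alpha> \<le> 1" using al by (simp add: mult_le_one)
        hence "4/25 * (\<alpha> * \<alpha>) \<le> 1/5" by simp
        hence "\<alpha> * (4/5) \<le> \<alpha> * (1 - 4/25 * (\<alpha> * \<alpha>))" using al by (intro mult_left_mono) auto
        thus ?thesis by (simp add: c_def algebra_simps)
      qed
      also have "\<dots> \<le> \<alpha> * cmod (1 - u * cnj u')"
      proof -
        have "cmod (u * cnj u') \<le> c * c" using uc by (simp add: norm_mult mult_mono' less_imp_le)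
        hence "1 - c * c \<le> cmod (1 - u * cnj u')"
          using norm_triangle_ineq2[of 1 "u * cnj u'"] by (smt (verit) norm_minus_commute norm_one)
        thus ?thesis using al by (intro mult_left_mono) auto
      qed
      finally show "disk_dist r1 z w \<le> \<alpha>" using disk_dist_from_unit[OF r1, of \<alpha> z w] al by (simp add: u_def u'_def)
    qed
  qed
  have P_good: "open (P j k) \<and> P j k \<subseteq> ball 0 r1 \<and> disk_diam r1 (P j k) \<le> \<alpha>"
    if yj: "x0 * l ^ j < 1" for j k
  proof (intro conjI)
    define y where "y = x0 * l ^ j"
    have y: "0 < y" "y < 1" using yj x0pos l1 by (auto simp: y_def)
    have Pdef: "P j k = {z. y < xf (cmod (z / of_real r1))} \<inter> {z. (1 - 3/5 * \<alpha>) * xf (cmod (z / of_real r1)) < (1 + 3/5 * \<alpha>) * y}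
       \<inter> {z. cmod (z / of_real r1 - of_real (cmod (z / of_real r1)) * ee (M y) k) < eta y * cmod (z / of_real r1)}"
      by (auto simp: P_def upiece_def y_def)
    have cxf: "continuous_on UNIV (\<lambda>z::complex. xf (cmod (z / of_real r1)))"
    proof -
      have nz: "\<And>z::complex. 1 + cmod z \<noteq> 0" by (smt (verit) norm_ge_zero)
      show ?thesis unfolding xf_def using r1 nz by (intro continuous_intros) auto
    qed
    show "open (P j k)" unfolding Pdef
      using r1 by (intro open_Int open_Collect_less cxf continuous_intros) auto
    show "P j k \<subseteq> ball 0 r1"
    proof
      fix z assume "z \<in> P j k"
      hence "y < xf (cmod (z / of_real r1))" unfolding Pdef by auto
      hence "0 < xf (cmod (z / of_real r1))" using y by simp
      hence "cmod (z / of_real r1) < 1" unfolding xf_def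
        using norm_ge_zero[of "z / of_real r1"] by (simp add: zero_less_divide_iff)
      thus "z \<in> ball 0 r1" using r1 by (simp add: norm_divide divide_less_eq)
    qed
    show "disk_diam r1 (P j k) \<le> \<alpha>"
    proof (rule disk_diam_le)
      show "0 \<le> \<alpha>" using al by simp
      fix z w assume zw: "z \<in> P j k" "w \<in> P j k"
      have "cmod (z / of_real r1 - w / of_real r1) \<le> \<alpha> * cmod (1 - (z / of_real r1) * cnj (w / of_real r1))"
        by (rule piece_diam[OF al y ee1 eta_def[of y]]) (use zw in \<open>auto simp: P_def y_def\<close>)
      thus "disk_dist r1 z w \<le> \<alpha>" using disk_dist_from_unit[OF r1] al by simp
    qed
  qed
  have outside: "x0 < xf (cmod (z / of_real r1)) \<and> xf (cmod (z / of_real r1)) \<le> xc \<and> 0 < cmod (z / of_real r1)"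
    if z: "z \<in> ball 0 r" "z \<notin> Pc" for z
  proof -
    define t where "t = cmod (z / of_real r1)"
    have tc: "c \<le> t" using z(2) r1 by (auto simp: Pc_def t_def norm_divide le_divide_eq)
    have "cmod z < r" using z(1) by simp
    hence "t < r / r1" using r1 by (simp add: t_def norm_divide divide_strict_right_mono)
    also have "r / r1 = 1 / (1 + \<epsilon>)" using rpos ep by (simp add: r1def)
    finally have tr: "t < 1 / (1 + \<epsilon>)" .
    have "x0 < xf t" using xf_less[of t "1 / (1 + \<epsilon>)"] tr xfr by (simp add: t_def)
    moreover have "xf t \<le> xc"
    proof (cases "t = c")
      case True thus ?thesis using xfc by simp
    next
      case False thus ?thesis using xf_less[of c t] tc cpos xfc by simp
    qed
    moreover have "0 < t" using tc cpos by linarith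
    ultimately show ?thesis unfolding t_def[symmetric] by blast
  qed
  have Npos: "N \<ge> 1"
  proof -
    have "0 < 5 / (\<alpha>^2 * \<epsilon>)" using al ep by simp
    hence "0 < real N" using Nbig by linarith
    thus ?thesis by simp
  qed
  show ?thesis
  proof (cases "x0 < xc")
    case False
    show ?thesis
    proof (rule family_to_W[of "{Pc}"])
      show "finite {Pc}" by simp
      show "card {Pc} \<le> N" using Npos by simp
      show "0 \<le> \<alpha>" using al by simp
      show "\<And>S. S \<in> {Pc} \<Longrightarrow> open S \<and> S \<subseteq> ball 0 r1 \<and> disk_diam r1 S \<le> \<alpha>" using Pc_good by simp
      show "ball 0 r \<subseteq> \<Union> {Pc}"
      proof
        fix z :: complex assume z: "z \<in> ball 0 r"
        show "z \<in> \<Union> {Pc}"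
        proof (rule ccontr)
          assume "z \<notin> \<Union> {Pc}"
          hence "z \<notin> Pc" by simp
          thus False using outside[OF z] False by simp
        qed
      qed
    qed
  next
    case True
    obtain m where m: "x0 * l ^ m < xc" "xc \<le> x0 * l ^ Suc m" using exists_band[OF x0pos l1 True] by blast
    define I where "I = (SIGMA j:{..m}. {..<M (x0 * l ^ j)})"
    define F where "F = insert Pc ((\<lambda>(j, k). P j k) ` I)"
    have finI: "finite I" by (simp add: I_def)
    have sumb: "(\<Sum>j\<le>m. real (M (x0 * l ^ j))) \<le> 5 / (2 * \<alpha>\<^sup>2) * (1 - x0) / x0"
      using sum_bound[OF al, of M, OF Mb x0pos, of m] m by (simp add: l_def xc_def)
    have "5 / (2 * \<alpha>\<^sup>2) * (1 - x0) / x0 = 5 / (\<alpha>^2 * \<epsilon>)"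
    proof -
      have d: "2 + \<epsilon> \<noteq> 0" "\<epsilon> \<noteq> 0" using ep by auto
      have e1: "1 - x0 = 2 / (2 + \<epsilon>)" using d by (simp add: x0_def field_simps)
      have "(1 - x0) / x0 = (2 / (2 + \<epsilon>)) / (\<epsilon> / (2 + \<epsilon>))" using e1 by (simp add: x0_def)
      also have "\<dots> = 2 / \<epsilon>"
      proof -
        have g: "\<And>a b c::real. c \<noteq> 0 \<Longrightarrow> b \<noteq> 0 \<Longrightarrow> (a / c) / (b / c) = a / b" by (simp add: field_simps)
        show ?thesis using g[OF d(1) d(2)] .
      qed
      finally have "(1 - x0) / x0 = 2 / \<epsilon>" .
      hence "5 / (2 * \<alpha>\<^sup>2) * (1 - x0) / x0 = 5 / (2 * \<alpha>\<^sup>2) * (2 / \<epsilon>)"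
        by (simp only: times_divide_eq_right[symmetric])
      also have "\<dots> = 5 / (\<alpha>^2 * \<epsilon>)" using al ep by (simp add: field_simps)
      finally show ?thesis .
    qed
    hence "real (\<Sum>j\<le>m. M (x0 * l ^ j)) < real N" using sumb Nbig by simp
    hence sN: "(\<Sum>j\<le>m. M (x0 * l ^ j)) < N" by linarith
    have cardF: "card F \<le> N"
    proof -
      have "card F \<le> Suc (card ((\<lambda>(j, k). P j k) ` I))" unfolding F_def using finI by (simp add: card_insert_if)
      also have "\<dots> \<le> Suc (card I)" using card_image_le[OF finI] by simp
      also have "card I = (\<Sum>j\<le>m. M (x0 * l ^ j))" by (simp add: I_def)
      finally show ?thesis using sN by simp
    qed
    have ylt: "x0 * l ^ j < 1" if "j \<le> m" for j
    proof -
      have "l ^ j \<le> l ^ m" using that l1 by (intro power_increasing) auto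
      hence "x0 * l ^ j \<le> x0 * l ^ m" using x0pos by simp
      thus ?thesis using m xc1 by linarith
    qed
    show ?thesis
    proof (rule family_to_W[of F])
      show "finite F" using finI by (simp add: F_def)
      show "card F \<le> N" by (rule cardF)
      show "0 \<le> \<alpha>" using al by simp
      show "\<And>S. S \<in> F \<Longrightarrow> open S \<and> S \<subseteq> ball 0 r1 \<and> disk_diam r1 S \<le> \<alpha>"
        using Pc_good P_good ylt by (auto simp: F_def I_def)
      show "ball 0 r \<subseteq> \<Union> F"
      proof
        fix z :: complex assume z: "z \<in> ball 0 r"
        show "z \<in> \<Union> F"
        proof (cases "z \<in> Pc")
          case True thus ?thesis by (auto simp: F_def)
        next
          case False
          define u where "u = z / of_real r1"
          define t where "t = cmod u"
          define x where "x = xf t"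
          have o: "x0 < x" "x \<le> xc" "0 < t" using outside[OF z False] by (simp_all add: x_def t_def u_def)
          obtain j where j: "x0 * l ^ j < x" "x \<le> x0 * l ^ Suc j" using exists_band[OF x0pos l1 o(1)] by blast
          have jm: "j \<le> m"
          proof -
            have "x0 * l ^ j < x0 * l ^ Suc m" using j o m by linarith
            hence "l ^ j < l ^ Suc m" using x0pos by simp
            thus ?thesis using power_less_imp_less_exp[OF l1] by fastforce
          qed
          define y where "y = x0 * l ^ j"
          have y: "0 < y" "y < 1" using ylt[OF jm] x0pos l1 by (auto simp: y_def)
          have etapos: "eta y > 0"
          proof -
            have "y\<^sup>2 < 1" "\<alpha>\<^sup>2 < 1" using y al by (auto simp: abs_square_less_1)
            thus ?thesis using y al by (simp add: eta_def)
          qed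
          have Mpos: "M y > 0" by (simp add: M_def)
          have "pi / eta y < real (M y)" unfolding M_def using M_big[of "pi / eta y"] etapos by simp
          hence piM: "pi / real (M y) < eta y" using etapos Mpos by (simp add: divide_less_eq mult.commute)
          define v where "v = u / of_real t"
          have v: "cmod v = 1" "u = of_real t * v" using o(3) by (auto simp: v_def t_def norm_divide)
          obtain k where k: "k < M y" "cmod (v - ee (M y) k) \<le> pi / real (M y)"
            using unit_root_close[OF v(1) Mpos] by (auto simp: ee_def)
          have ang: "cmod (u - of_real t * ee (M y) k) < eta y * t"
          proof -
            have "u - of_real t * ee (M y) k = of_real t * (v - ee (M y) k)" using v(2) by (simp add: algebra_simps)
            hence "cmod (u - of_real t * ee (M y) k) = t * cmod (v - ee (M y) k)" using o(3) by (simp add: norm_mult)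
            also have "\<dots> < t * eta y" using k(2) piM o(3) by (intro mult_strict_left_mono) auto
            finally show ?thesis by (simp add: mult.commute)
          qed
          have rad: "(1 - 3/5 * \<alpha>) * x < (1 + 3/5 * \<alpha>) * y"
          proof -
            have a1: "0 < 1 - 3/5 * \<alpha>" using al by simp
            have "x \<le> l * y" using j by (simp add: y_def mult.commute mult.left_commute)
            hence "(1 - 3/5 * \<alpha>) * x \<le> (1 - 3/5 * \<alpha>) * (l * y)" using a1 by (intro mult_left_mono) auto
            also have "\<dots> = ((1 - 3/5 * \<alpha>) * l) * y" by simp
            also have "\<dots> < (1 + 3/5 * \<alpha>) * y"
            proof (rule mult_strict_right_mono[OF _ y(1)])
              have "(1 + 3/5 * \<alpha>) * (2 - \<alpha>) - (1 - 3/5 * \<alpha>) * (2 + \<alpha>) = 2/5 * \<alpha>"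
                by (simp add: field_simps)
              hence "(1 - 3/5 * \<alpha>) * (2 + \<alpha>) < (1 + 3/5 * \<alpha>) * (2 - \<alpha>)" using al by linarith
              thus "(1 - 3/5 * \<alpha>) * l < 1 + 3/5 * \<alpha>" using al by (simp add: l_def pos_divide_less_eq)
            qed
            finally show ?thesis .
          qed
          have "z \<in> P j k"
            unfolding P_def upiece_def using j(1) rad ang
            by (simp add: y_def[symmetric] x_def t_def u_def)
          moreover have "(j, k) \<in> I" using jm k(1) by (simp add: I_def y_def)
          ultimately show ?thesis by (auto simp: F_def)
        qed
      qed
    qed
  qed
qed

end
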